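(* Let $n \geq 2$ and let $X_1, \dots, X_n$ be mutually independent nonnegative random variables with survival functions $\overline{F}_i(x) = \mathbb{P}(X_i > x)$. Let $\boldsymbol{\theta} = (\theta_1, \dots, \theta_n) \in (0,1)^n$ with $\sum_{i=1}^n \theta_i = 1$. For $\theta \in (0,1)$ define $$r_i(\theta) := \{ x \geq 0 : \theta \, \overline{F}_i(x) \leq \overline{F}_i(x/\theta) \},$$ and define $$\mathcal{R}(\boldsymbol{\theta}) := \bigcap_{i=1}^n \ \bigcap_{\{i\} \subseteq \mu \subsetneq \{1,\dots,n\}} r_i(\theta_\mu),$$ where $\theta_\mu = \sum_{j \in \mu} \theta_j$. Then $$\mathbb{P}\Big( \sum_{i=1}^n \theta_i X_i > x \Big) \geq \sum_{i=1}^n \theta_i \, \mathbb{P}(X_i > x)$$ for all $x \in \mathcal{R}(\boldsymbol{\theta})$. *)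

theory Defs
  imports "HOL-Probability.Probability"
begin

definition surv :: "'a measure \<Rightarrow> ('a \<Rightarrow> real) \<Rightarrow> real \<Rightarrow> real" where
  "surv M Y x = measure M {\<omega> \<in> space M. Y \<omega> > x}"

definition r_set :: "'a measure \<Rightarrow> ('a \<Rightarrow> real) \<Rightarrow> real \<Rightarrow> real set" where
  "r_set M Y t = {x. 0 \<le> x \<and> t * surv M Y x \<le> surv M Y (x / t)}"

text \<open>R(theta): intersection over i and over index sets mu with i in mu, mu a proper
  subset of the index set {0..<n} (indices shifted to start at 0).\<close>
definition R_set :: "'a measure \<Rightarrow> (nat \<Rightarrow> 'a \<Rightarrow> real) \<Rightarrow> (nat \<Rightarrow> real) \<Rightarrow> nat \<Rightarrow> real set" where
  "R_set M X \<theta> n = (\<Inter>i\<in>{..<n}. \<Inter>\<mu>\<in>{\<mu>. i \<in> \<mu> \<and> \<mu> \<subset> {..<n}}. r_set M (X i) (\<Sum>j\<in>\<mu>. \<theta> j))"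

end

theory Submission
  imports Defs
begin


context prob_space begin

lemma indep_prod:
  assumes ind: "indep_vars (\<lambda>_. borel) X N" and fin: "finite J" and JN: "J \<subseteq> N"
    and A: "\<forall>k\<in>J. A k \<in> sets borel"
  shows "prob {\<omega>\<in>space M. \<forall>k\<in>J. X k \<omega> \<in> A k} = (\<Prod>k\<in>J. prob {\<omega>\<in>space M. X k \<omega> \<in> A k})"
proof (cases "J = {}")
  case True
  then show ?thesis by (simp add: prob_space)
next
  case False
  have eq: "{\<omega>\<in>space M. \<forall>k\<in>J. X k \<omega> \<in> A k} = (\<Inter>j\<in>J. X j -` A j \<inter> space M)"
    using False by auto
  have "indep_sets (\<lambda>i. sigma_sets (space M) { X i -` A \<inter> space M | A. A \<in> sets borel}) N"
    using ind unfolding indep_vars_def by simp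
  from indep_setsD[OF this JN False fin, of "\<lambda>j. X j -` A j \<inter> space M"] A
  have "prob (\<Inter>j\<in>J. X j -` A j \<inter> space M) = (\<Prod>j\<in>J. prob (X j -` A j \<inter> space M))"
    by (blast intro: sigma_sets.Basic)
  moreover have "\<And>k. {\<omega>\<in>space M. X k \<omega> \<in> A k} = X k -` A k \<inter> space M" by auto
  ultimately show ?thesis using eq by simp
qed

lemma alg_expand:
  fixes a d g :: "nat \<Rightarrow> real"
  assumes fin: "finite I"
  shows "(\<Sum>i\<in>I. g i * (\<Prod>k\<in>I-{i}. a k + d k)) =
    (\<Sum>L\<in>Pow I. (\<Sum>i\<in>L. g i * (\<Prod>k\<in>L-{i}. a k)) * (\<Prod>k\<in>I-L. d k))"
proof -
  have "(\<Sum>L\<in>Pow I. (\<Sum>i\<in>L. g i * (\<Prod>k\<in>L-{i}. a k)) * (\<Prod>k\<in>I-L. d k))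
      = (\<Sum>L\<in>Pow I. \<Sum>i\<in>{i. i \<in> I \<and> i \<in> L}. g i * (\<Prod>k\<in>L-{i}. a k) * (\<Prod>k\<in>I-L. d k))"
    apply (rule sum.cong[OF refl])
    apply (simp add: sum_distrib_right)
    apply (rule sum.cong)
    by auto
  also have "\<dots> = (\<Sum>i\<in>I. \<Sum>L\<in>{L. L \<in> Pow I \<and> i \<in> L}. g i * (\<Prod>k\<in>L-{i}. a k) * (\<Prod>k\<in>I-L. d k))"
    by (rule sum.swap_restrict) (use fin in auto)
  also have "\<dots> = (\<Sum>i\<in>I. g i * (\<Prod>k\<in>I-{i}. a k + d k))"
  proof (rule sum.cong[OF refl])
    fix i assume i: "i \<in> I"
    have bij: "{L. L \<in> Pow I \<and> i \<in> L} = insert i ` Pow (I - {i})"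
    proof
      show "{L. L \<in> Pow I \<and> i \<in> L} \<subseteq> insert i ` Pow (I - {i})"
      proof
        fix L assume "L \<in> {L. L \<in> Pow I \<and> i \<in> L}"
        then have "L = insert i (L - {i})" "L - {i} \<in> Pow (I - {i})" by auto
        then show "L \<in> insert i ` Pow (I - {i})" by blast
      qed
    qed (use i in auto)
    have inj: "inj_on (insert i) (Pow (I - {i}))"
      by (rule inj_onI) (metis Diff_insert_absorb PowD subset_Diff_insert)
    have "(\<Sum>L\<in>{L. L \<in> Pow I \<and> i \<in> L}. g i * (\<Prod>k\<in>L-{i}. a k) * (\<Prod>k\<in>I-L. d k))
        = (\<Sum>L\<in>Pow (I-{i}). g i * (\<Prod>k\<in>insert i L-{i}. a k) * (\<Prod>k\<in>I-insert i L. d k))"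
      unfolding bij by (rule sum.reindex[OF inj, unfolded comp_def])
    also have "\<dots> = (\<Sum>L\<in>Pow (I-{i}). g i * ((\<Prod>k\<in>L. a k) * (\<Prod>k\<in>(I-{i})-L. d k)))"
    proof (rule sum.cong[OF refl])
      fix L assume "L \<in> Pow (I-{i})"
      then have "insert i L - {i} = L" "I - insert i L = (I-{i}) - L" by auto
      then show "g i * (\<Prod>k\<in>insert i L-{i}. a k) * (\<Prod>k\<in>I-insert i L. d k) = g i * ((\<Prod>k\<in>L. a k) * (\<Prod>k\<in>(I-{i})-L. d k))"
        by simp
    qed
    also have "\<dots> = g i * (\<Prod>k\<in>I-{i}. a k + d k)"
      by (simp add: prod_add fin sum_distrib_left)
    finally show "(\<Sum>L\<in>{L. L \<in> Pow I \<and> i \<in> L}. g i * (\<Prod>k\<in>L-{i}. a k) * (\<Prod>k\<in>I-L. d k)) = g i * (\<Prod>k\<in>I-{i}. a k + d k)" .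
  qed
  finally show ?thesis by simp
qed


lemma main_ind:
  fixes X :: "nat \<Rightarrow> 'a \<Rightarrow> real" and \<theta> b :: "nat \<Rightarrow> real" and n :: nat and x :: real
  assumes ind: "indep_vars (\<lambda>_. borel) X {..<n}"
    and \<theta>pos: "\<And>i. i < n \<Longrightarrow> 0 < \<theta> i"
    and x0: "0 \<le> x"
    and cond: "\<And>\<mu> i. \<mu> \<subseteq> {..<n} \<Longrightarrow> i \<in> \<mu> \<Longrightarrow> sum \<theta> \<mu> * b i \<le> prob {\<omega>\<in>space M. x / sum \<theta> \<mu> < X i \<omega>}"
  shows "finite I \<Longrightarrow> I \<subseteq> {..<n} \<Longrightarrow> K \<subseteq> {..<n} \<Longrightarrow> I \<inter> K = {} \<Longrightarrow> (\<forall>k\<in>K. B k \<in> sets borel) \<Longrightarrow> y * sum \<theta> I \<le> x \<Longrightarrow>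
    (\<Sum>i\<in>I. \<theta> i * b i * (\<Prod>k\<in>I-{i}. prob {\<omega>\<in>space M. y < X k \<omega>})) * (\<Prod>k\<in>K. prob {\<omega>\<in>space M. X k \<omega> \<in> B k})
    \<le> prob {\<omega>\<in>space M. (\<exists>\<mu>\<subseteq>I. \<mu>\<noteq>{} \<and> (\<forall>i\<in>\<mu>. x / sum \<theta> \<mu> < X i \<omega>)) \<and> (\<forall>i\<in>I. y < X i \<omega>) \<and> (\<forall>k\<in>K. X k \<omega> \<in> B k)}"
proof (induction I arbitrary: y K B rule: finite_psubset_induct)
  case (psubset I)
  have rv: "\<And>i. i < n \<Longrightarrow> X i \<in> borel_measurable M"
    using ind unfolding indep_vars_def by auto
  show ?case
  proof (cases "I = {}")
    case True
    then show ?thesis by simp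
  next
    case Ine: False
    have fK: "finite K" using psubset.prems(2) finite_subset by blast
    define s where "s = sum \<theta> I"
    define z where "z = x / s"
    have spos: "0 < s" unfolding s_def using psubset.prems(1) \<theta>pos Ine psubset.hyps
      by (intro sum_pos) auto
    have yz: "y \<le> z" unfolding z_def using psubset.prems(5) spos s_def
      by (simp add: pos_le_divide_eq)
    have hz: "z \<le> x / sum \<theta> \<mu>" if "\<mu> \<subseteq> I" "\<mu> \<noteq> {}" for \<mu>
    proof -
      have fin: "finite \<mu>" using that psubset.hyps finite_subset by blast
      have p: "0 < sum \<theta> \<mu>" using that fin \<theta>pos psubset.prems(1) by (intro sum_pos) auto
      have "sum \<theta> \<mu> \<le> s" unfolding s_def using that psubset.hyps \<theta>pos psubset.prems(1)
        by (intro sum_mono2) (auto intro: less_imp_le)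
      then show ?thesis unfolding z_def using p x0 by (intro divide_left_mono) auto
    qed
    define Ev where "Ev = (\<lambda>J \<omega>. \<exists>\<mu>\<subseteq>J. \<mu>\<noteq>{} \<and> (\<forall>i\<in>\<mu>. x / sum \<theta> \<mu> < X i \<omega>))"
    define SL where "SL = (\<lambda>L. {\<omega>\<in>space M. Ev I \<omega> \<and> (\<forall>i\<in>I. y < X i \<omega>) \<and> (\<forall>k\<in>K. X k \<omega> \<in> B k) \<and> (\<forall>k\<in>I. z < X k \<omega> \<longleftrightarrow> k \<in> L)})"
    define a where "a = (\<lambda>k. prob {\<omega>\<in>space M. z < X k \<omega>})"
    define c where "c = (\<lambda>k. prob {\<omega>\<in>space M. y < X k \<omega>})"
    define d where "d = (\<lambda>k. prob {\<omega>\<in>space M. X k \<omega> \<in> {y<..z}})"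
    define Q where "Q = (\<Prod>k\<in>K. prob {\<omega>\<in>space M. X k \<omega> \<in> B k})"
    define F where "F = (\<lambda>L. (\<Sum>i\<in>L. \<theta> i * b i * (\<Prod>k\<in>L-{i}. a k)) * (\<Prod>k\<in>I-L. d k))"
    have cad: "c k = a k + d k" if "k \<in> I" for k
    proof -
      have "k < n" using that psubset.prems(1) by auto
      then have m: "{\<omega>\<in>space M. z < X k \<omega>} \<in> events" "{\<omega>\<in>space M. y < X k \<omega>} \<in> events"
        using rv by measurable
      have "{\<omega>\<in>space M. X k \<omega> \<in> {y<..z}} = {\<omega>\<in>space M. y < X k \<omega>} - {\<omega>\<in>space M. z < X k \<omega>}"
        by auto
      moreover have "{\<omega>\<in>space M. z < X k \<omega>} \<subseteq> {\<omega>\<in>space M. y < X k \<omega>}" using yz by auto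
      ultimately show ?thesis unfolding a_def c_def d_def
        using finite_measure_Diff[OF m(2) m(1)] by (simp add: Diff_Int)
    qed
    have Smeas: "SL L \<in> events" for L
    proof -
      have pX1: "Measurable.pred M (\<lambda>\<omega>. t < X i \<omega>)" if "i \<in> I" for i t
      proof -
        have "X i \<in> borel_measurable M" using rv that psubset.prems(1) by auto
        then show ?thesis unfolding pred_def by (intro borel_measurable_less) auto
      qed
      have pX2: "Measurable.pred M (\<lambda>\<omega>. X k \<omega> \<in> B k)" if "k \<in> K" for k
      proof -
        have [measurable]: "X k \<in> borel_measurable M" using rv that psubset.prems(2) by auto
        have [measurable]: "B k \<in> sets borel" using that psubset.prems(4) by auto
        show ?thesis by measurable
      qed
      note pX = pX1 pX2
      have fI: "finite I" "finite K" using psubset.hyps psubset.prems(2) finite_subset by auto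
      have "Measurable.pred M (\<lambda>\<omega>. (\<exists>\<mu>\<in>Pow I. \<mu> \<noteq> {} \<and> (\<forall>i\<in>\<mu>. x / sum \<theta> \<mu> < X i \<omega>)) \<and> (\<forall>i\<in>I. y < X i \<omega>) \<and> (\<forall>k\<in>K. X k \<omega> \<in> B k) \<and> (\<forall>k\<in>I. (z < X k \<omega>) = (k \<in> L)))"
        apply (intro pred_intros_logic pred_intros_finite fI finite_Pow_iff[THEN iffD2] pX)
        using fI by (auto intro!: pX intro: finite_subset)
      moreover have "SL L = {\<omega>\<in>space M. (\<exists>\<mu>\<in>Pow I. \<mu> \<noteq> {} \<and> (\<forall>i\<in>\<mu>. x / sum \<theta> \<mu> < X i \<omega>)) \<and> (\<forall>i\<in>I. y < X i \<omega>) \<and> (\<forall>k\<in>K. X k \<omega> \<in> B k) \<and> (\<forall>k\<in>I. (z < X k \<omega>) = (k \<in> L))}"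
        unfolding SL_def Ev_def by auto
      ultimately show ?thesis by (simp add: pred_def)
    qed
    have Sunion: "{\<omega>\<in>space M. Ev I \<omega> \<and> (\<forall>i\<in>I. y < X i \<omega>) \<and> (\<forall>k\<in>K. X k \<omega> \<in> B k)} = (\<Union>L\<in>Pow I. SL L)"
      unfolding SL_def by auto
    have Sdisj: "disjoint_family_on SL (Pow I)"
      unfolding disjoint_family_on_def SL_def by auto
    have probS: "prob {\<omega>\<in>space M. Ev I \<omega> \<and> (\<forall>i\<in>I. y < X i \<omega>) \<and> (\<forall>k\<in>K. X k \<omega> \<in> B k)} = (\<Sum>L\<in>Pow I. prob (SL L))"
      unfolding Sunion using psubset.hyps Smeas Sdisj by (intro finite_measure_finite_Union) auto
    have SLI: "prob (SL I) = (\<Prod>k\<in>I. a k) * Q"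
    proof -
      define A where "A = (\<lambda>k. if k \<in> I then {z<..} else B k)"
      have "SL I = {\<omega>\<in>space M. \<forall>k\<in>I\<union>K. X k \<omega> \<in> A k}"
      proof (intro set_eqI iffI)
        fix \<omega> assume "\<omega> \<in> SL I" then show "\<omega> \<in> {\<omega>\<in>space M. \<forall>k\<in>I\<union>K. X k \<omega> \<in> A k}"
          unfolding SL_def A_def by auto
      next
        fix \<omega> assume w: "\<omega> \<in> {\<omega>\<in>space M. \<forall>k\<in>I\<union>K. X k \<omega> \<in> A k}"
        then have all: "\<forall>k\<in>I\<union>K. X k \<omega> \<in> A k" and sp: "\<omega> \<in> space M" by auto
        have zI: "\<forall>i\<in>I. z < X i \<omega>"
        proof
          fix i assume i: "i \<in> I" then have "X i \<omega> \<in> A i" using all by auto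
          then show "z < X i \<omega>" using i by (simp add: A_def)
        qed
        have BK: "\<forall>k\<in>K. X k \<omega> \<in> B k"
        proof
          fix k assume k: "k \<in> K" then have "X k \<omega> \<in> A k" using all by auto
          moreover have "k \<notin> I" using k psubset.prems(3) by auto
          ultimately show "X k \<omega> \<in> B k" by (simp add: A_def)
        qed
        have "Ev I \<omega>" unfolding Ev_def using zI Ine z_def s_def by auto
        then show "\<omega> \<in> SL I" unfolding SL_def using zI BK sp yz by force
      qed
      also have "prob \<dots> = (\<Prod>k\<in>I\<union>K. prob {\<omega>\<in>space M. X k \<omega> \<in> A k})"
        using psubset.hyps psubset.prems fK
        by (intro indep_prod[OF ind]) (auto simp: A_def)
      also have "\<dots> = (\<Prod>k\<in>I. prob {\<omega>\<in>space M. X k \<omega> \<in> A k}) * (\<Prod>k\<in>K. prob {\<omega>\<in>space M. X k \<omega> \<in> A k})"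
        using psubset.hyps psubset.prems fK
        by (intro prod.union_disjoint) auto
      also have "\<dots> = (\<Prod>k\<in>I. a k) * Q"
        unfolding a_def Q_def A_def using psubset.prems(3)
        by (intro arg_cong2[where f="(*)"] prod.cong) auto
      finally show ?thesis .
    qed
    have SLL: "F L * Q \<le> prob (SL L)" if LI: "L \<in> Pow I - {I}" for L
    proof -
      have Lsub: "L \<subset> I" using LI by auto
      define B' where "B' = (\<lambda>k. if k \<in> I - L then {y<..z} else B k)"
      have zL: "z * sum \<theta> L \<le> x"
      proof (cases "L = {}")
        case True then show ?thesis using x0 by simp
      next
        case False
        have fin: "finite L" using Lsub psubset.hyps finite_subset by auto
        have p: "0 < sum \<theta> L" using False fin \<theta>pos Lsub psubset.prems(1) by (intro sum_pos) auto
        have "z \<le> x / sum \<theta> L" using hz[of L] Lsub False by auto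
        then show ?thesis using p by (simp add: pos_le_divide_eq)
      qed
      have ih: "(\<Sum>i\<in>L. \<theta> i * b i * (\<Prod>k\<in>L-{i}. prob {\<omega>\<in>space M. z < X k \<omega>})) * (\<Prod>k\<in>K \<union> (I - L). prob {\<omega>\<in>space M. X k \<omega> \<in> B' k})
        \<le> prob {\<omega>\<in>space M. (\<exists>\<mu>\<subseteq>L. \<mu>\<noteq>{} \<and> (\<forall>i\<in>\<mu>. x / sum \<theta> \<mu> < X i \<omega>)) \<and> (\<forall>i\<in>L. z < X i \<omega>) \<and> (\<forall>k\<in>K \<union> (I - L). X k \<omega> \<in> B' k)}"
        apply (rule psubset.IH[OF Lsub])
        using Lsub psubset.prems zL by (auto simp: B'_def)
      have pr: "(\<Prod>k\<in>K \<union> (I - L). prob {\<omega>\<in>space M. X k \<omega> \<in> B' k}) = Q * (\<Prod>k\<in>I-L. d k)"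
      proof -
        have "(\<Prod>k\<in>K \<union> (I - L). prob {\<omega>\<in>space M. X k \<omega> \<in> B' k}) =
           (\<Prod>k\<in>K. prob {\<omega>\<in>space M. X k \<omega> \<in> B' k}) * (\<Prod>k\<in>I - L. prob {\<omega>\<in>space M. X k \<omega> \<in> B' k})"
          using fK psubset.hyps psubset.prems(3) by (intro prod.union_disjoint) auto
        also have "\<dots> = Q * (\<Prod>k\<in>I-L. d k)"
          unfolding Q_def d_def B'_def using psubset.prems(3)
          by (intro arg_cong2[where f="(*)"] prod.cong) auto
        finally show ?thesis .
      qed
      have seteq: "{\<omega>\<in>space M. (\<exists>\<mu>\<subseteq>L. \<mu>\<noteq>{} \<and> (\<forall>i\<in>\<mu>. x / sum \<theta> \<mu> < X i \<omega>)) \<and> (\<forall>i\<in>L. z < X i \<omega>) \<and> (\<forall>k\<in>K \<union> (I - L). X k \<omega> \<in> B' k)} = SL L"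
      proof (intro set_eqI iffI)
        fix \<omega> assume "\<omega> \<in> {\<omega>\<in>space M. (\<exists>\<mu>\<subseteq>L. \<mu>\<noteq>{} \<and> (\<forall>i\<in>\<mu>. x / sum \<theta> \<mu> < X i \<omega>)) \<and> (\<forall>i\<in>L. z < X i \<omega>) \<and> (\<forall>k\<in>K \<union> (I - L). X k \<omega> \<in> B' k)}"
        then have sp: "\<omega> \<in> space M" and ev: "\<exists>\<mu>\<subseteq>L. \<mu>\<noteq>{} \<and> (\<forall>i\<in>\<mu>. x / sum \<theta> \<mu> < X i \<omega>)"
          and zl: "\<forall>i\<in>L. z < X i \<omega>" and bb: "\<forall>k\<in>K \<union> (I - L). X k \<omega> \<in> B' k" by auto
        have evI: "Ev I \<omega>" unfolding Ev_def using ev Lsub by blast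
        have bI: "\<forall>k\<in>I-L. y < X k \<omega> \<and> X k \<omega> \<le> z"
        proof
          fix k assume k: "k \<in> I - L" then have "X k \<omega> \<in> B' k" using bb by auto
          then show "y < X k \<omega> \<and> X k \<omega> \<le> z" using k by (simp add: B'_def)
        qed
        have bK: "\<forall>k\<in>K. X k \<omega> \<in> B k"
        proof
          fix k assume k: "k \<in> K" then have "X k \<omega> \<in> B' k" using bb by auto
          moreover have "k \<notin> I" using k psubset.prems(3) by auto
          ultimately show "X k \<omega> \<in> B k" by (simp add: B'_def)
        qed
        have cap: "\<forall>i\<in>I. y < X i \<omega>"
        proof
          fix i assume i: "i \<in> I"
          show "y < X i \<omega>"
          proof (cases "i \<in> L")
            case True then show ?thesis using zl yz by force
          next
            case False then show ?thesis using bI i by auto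
          qed
        qed
        have pat: "\<forall>k\<in>I. z < X k \<omega> \<longleftrightarrow> k \<in> L"
          using zl bI by force
        show "\<omega> \<in> SL L" unfolding SL_def using sp evI cap bK pat by blast
      next
        fix \<omega> assume "\<omega> \<in> SL L"
        then have sp: "\<omega> \<in> space M" and evI: "Ev I \<omega>" and cap: "\<forall>i\<in>I. y < X i \<omega>"
          and bK: "\<forall>k\<in>K. X k \<omega> \<in> B k" and pat: "\<forall>k\<in>I. z < X k \<omega> \<longleftrightarrow> k \<in> L"
          unfolding SL_def by auto
        from evI obtain \<mu> where mu: "\<mu> \<subseteq> I" "\<mu> \<noteq> {}" "\<forall>i\<in>\<mu>. x / sum \<theta> \<mu> < X i \<omega>"
          unfolding Ev_def by blast
        have "\<mu> \<subseteq> L"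
        proof
          fix i assume i: "i \<in> \<mu>"
          have "z < X i \<omega>" using hz[OF mu(1,2)] mu(3) i by force
          then show "i \<in> L" using pat mu(1) i by auto
        qed
        then have ev: "\<exists>\<mu>\<subseteq>L. \<mu>\<noteq>{} \<and> (\<forall>i\<in>\<mu>. x / sum \<theta> \<mu> < X i \<omega>)" using mu by blast
        have zl: "\<forall>i\<in>L. z < X i \<omega>" using pat Lsub by auto
        have bb: "\<forall>k\<in>K \<union> (I - L). X k \<omega> \<in> B' k"
        proof
          fix k assume k: "k \<in> K \<union> (I - L)"
          show "X k \<omega> \<in> B' k"
          proof (cases "k \<in> I - L")
            case True then show ?thesis using cap pat by (auto simp: B'_def not_less)
          next
            case False then show ?thesis using k bK by (auto simp: B'_def)
          qed
        qed
        show "\<omega> \<in> {\<omega>\<in>space M. (\<exists>\<mu>\<subseteq>L. \<mu>\<noteq>{} \<and> (\<forall>i\<in>\<mu>. x / sum \<theta> \<mu> < X i \<omega>)) \<and> (\<forall>i\<in>L. z < X i \<omega>) \<and> (\<forall>k\<in>K \<union> (I - L). X k \<omega> \<in> B' k)}"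
          using sp ev zl bb by blast
      qed
      have "F L * Q = (\<Sum>i\<in>L. \<theta> i * b i * (\<Prod>k\<in>L-{i}. prob {\<omega>\<in>space M. z < X k \<omega>})) * (\<Prod>k\<in>K \<union> (I - L). prob {\<omega>\<in>space M. X k \<omega> \<in> B' k})"
        unfolding pr F_def a_def by (simp add: mult_ac)
      also have "\<dots> \<le> prob (SL L)" using ih unfolding seteq .
      finally show ?thesis .
    qed
    have FI: "F I \<le> (\<Prod>k\<in>I. a k)"
    proof -
      have "F I = (\<Sum>i\<in>I. \<theta> i * b i * (\<Prod>k\<in>I-{i}. a k))" unfolding F_def by simp
      also have "\<dots> \<le> (\<Sum>i\<in>I. (\<theta> i / s) * (\<Prod>k\<in>I. a k))"
      proof (rule sum_mono)
        fix i assume i: "i \<in> I"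
        have sb: "s * b i \<le> a i" using cond[OF psubset.prems(1) i] unfolding a_def z_def s_def by simp
        have th: "0 \<le> \<theta> i" using \<theta>pos i psubset.prems(1) by (auto intro: less_imp_le)
        have P: "0 \<le> (\<Prod>k\<in>I-{i}. a k)" unfolding a_def by (simp add: prod_nonneg)
        have "\<theta> i * b i \<le> (\<theta> i / s) * a i"
        proof -
          have "\<theta> i * b i = (\<theta> i / s) * (s * b i)" using spos by simp
          also have "\<dots> \<le> (\<theta> i / s) * a i" using sb th spos by (intro mult_left_mono) auto
          finally show ?thesis .
        qed
        then have "\<theta> i * b i * (\<Prod>k\<in>I-{i}. a k) \<le> (\<theta> i / s) * a i * (\<Prod>k\<in>I-{i}. a k)"
          using P by (rule mult_right_mono)
        also have "\<dots> = (\<theta> i / s) * (\<Prod>k\<in>I. a k)"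
          using psubset.hyps i by (simp add: prod.remove mult.assoc)
        finally show "\<theta> i * b i * (\<Prod>k\<in>I-{i}. a k) \<le> (\<theta> i / s) * (\<Prod>k\<in>I. a k)" .
      qed
      also have "\<dots> = (\<Sum>i\<in>I. \<theta> i) / s * (\<Prod>k\<in>I. a k)"
        by (simp add: sum_distrib_right sum_divide_distrib)
      also have "\<dots> = (\<Prod>k\<in>I. a k)" using spos s_def by simp
      finally show ?thesis .
    qed
    have "(\<Sum>i\<in>I. \<theta> i * b i * (\<Prod>k\<in>I-{i}. c k)) = (\<Sum>i\<in>I. \<theta> i * b i * (\<Prod>k\<in>I-{i}. a k + d k))"
      using cad by (intro sum.cong refl arg_cong[where f="\<lambda>t. _ * t"] prod.cong) auto
    also have "\<dots> = (\<Sum>L\<in>Pow I. F L)" unfolding F_def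
      by (rule alg_expand[OF psubset.hyps])
    also have "\<dots> = F I + (\<Sum>L\<in>Pow I - {I}. F L)"
      using psubset.hyps by (subst sum.remove[of _ I]) auto
    finally have eqF: "(\<Sum>i\<in>I. \<theta> i * b i * (\<Prod>k\<in>I-{i}. c k)) = F I + (\<Sum>L\<in>Pow I - {I}. F L)" .
    have "(\<Sum>i\<in>I. \<theta> i * b i * (\<Prod>k\<in>I-{i}. c k)) * Q = F I * Q + (\<Sum>L\<in>Pow I - {I}. F L * Q)"
      unfolding eqF by (simp only: distrib_right sum_distrib_right)
    also have "\<dots> \<le> prob (SL I) + (\<Sum>L\<in>Pow I - {I}. prob (SL L))"
    proof (rule add_mono)
      have "Q \<ge> 0" unfolding Q_def by (simp add: prod_nonneg)
      then show "F I * Q \<le> prob (SL I)" unfolding SLI using FI by (simp add: mult_right_mono)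
    qed (intro sum_mono SLL)
    also have "\<dots> = (\<Sum>L\<in>Pow I. prob (SL L))"
      using psubset.hyps by (subst (2) sum.remove[of _ I]) auto
    finally show ?thesis using probS unfolding c_def Q_def Ev_def by simp
  qed
qed

end




theorem theorem1:
  fixes M :: "'a measure" and X :: "nat \<Rightarrow> 'a \<Rightarrow> real" and \<theta> :: "nat \<Rightarrow> real"
    and n :: nat and x :: real
  assumes "prob_space M"
    and "n \<ge> 2"
    and "\<And>i. i < n \<Longrightarrow> X i \<in> borel_measurable M"
    and "prob_space.indep_vars M (\<lambda>_. borel) X {..<n}"
    and "\<And>i \<omega>. i < n \<Longrightarrow> \<omega> \<in> space M \<Longrightarrow> 0 \<le> X i \<omega>"
    and "\<And>i. i < n \<Longrightarrow> 0 < \<theta> i \<and> \<theta> i < 1"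
    and "(\<Sum>i<n. \<theta> i) = 1"
    and "x \<in> R_set M X \<theta> n"
  shows "measure M {\<omega> \<in> space M. (\<Sum>i<n. \<theta> i * X i \<omega>) > x} \<ge> (\<Sum>i<n. \<theta> i * surv M (X i) x)"
proof -
  interpret P: prob_space M by (rule assms(1))
  have Rx: "x \<in> r_set M (X i) (sum \<theta> \<mu>)" if "i \<in> \<mu>" "\<mu> \<subset> {..<n}" for i \<mu>
  proof -
    have "i < n" using that by auto
    have "x \<in> (\<Inter>\<mu>\<in>{\<mu>. i \<in> \<mu> \<and> \<mu> \<subset> {..<n}}. r_set M (X i) (sum \<theta> \<mu>))"
      using assms(8) unfolding R_set_def by (rule INT_D) (simp add: \<open>i < n\<close>)
    then show ?thesis by (rule INT_D) (simp add: that)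
  qed
  have n1: "1 < n" using assms(2) by simp
  have ne: "{0} \<noteq> {..<n}"
  proof
    assume "{0} = {..<n}"
    then have "(1::nat) \<in> {0}" using n1 by (metis lessThan_iff)
    then show False by simp
  qed
  have sub0: "{0} \<subset> {..<n}" using ne n1 by auto
  have "x \<in> r_set M (X 0) (sum \<theta> {0})" using Rx[of 0 "{0}"] sub0 by simp
  then have x0: "0 \<le> x" unfolding r_set_def by simp
  have \<theta>pos: "\<And>i. i < n \<Longrightarrow> 0 < \<theta> i" using assms(6) by auto
  define b where "b = (\<lambda>i. surv M (X i) x)"
  have cond: "sum \<theta> \<mu> * b i \<le> P.prob {\<omega>\<in>space M. x / sum \<theta> \<mu> < X i \<omega>}"
    if "\<mu> \<subseteq> {..<n}" "i \<in> \<mu>" for \<mu> i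
  proof (cases "\<mu> = {..<n}")
    case True
    then show ?thesis using assms(7) by (simp add: b_def surv_def)
  next
    case False
    then have "\<mu> \<subset> {..<n}" using that by auto
    then have "x \<in> {x. 0 \<le> x \<and> sum \<theta> \<mu> * surv M (X i) x \<le> surv M (X i) (x / sum \<theta> \<mu>)}"
      using Rx[OF that(2)] unfolding r_set_def by blast
    then show ?thesis by (simp add: b_def surv_def)
  qed
  have main: "(\<Sum>i\<in>{..<n}. \<theta> i * b i * (\<Prod>k\<in>{..<n}-{i}. P.prob {\<omega>\<in>space M. -1 < X k \<omega>})) * (\<Prod>k\<in>{}. P.prob {\<omega>\<in>space M. X k \<omega> \<in> (\<lambda>_. UNIV) k})
    \<le> P.prob {\<omega>\<in>space M. (\<exists>\<mu>\<subseteq>{..<n}. \<mu>\<noteq>{} \<and> (\<forall>i\<in>\<mu>. x / sum \<theta> \<mu> < X i \<omega>)) \<and> (\<forall>i\<in>{..<n}. -1 < X i \<omega>) \<and> (\<forall>k\<in>{}. X k \<omega> \<in> (\<lambda>_. UNIV) k)}"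
    by (rule P.main_ind[OF assms(4) \<theta>pos x0 cond]) (use x0 assms(7) in auto)
  have one: "P.prob {\<omega>\<in>space M. -1 < X k \<omega>} = 1" if "k < n" for k
  proof -
    have "{\<omega>\<in>space M. -1 < X k \<omega>} = space M" using assms(5)[OF that] by force
    then show ?thesis by (simp add: P.prob_space)
  qed
  have lhs: "(\<Sum>i<n. \<theta> i * surv M (X i) x) = (\<Sum>i\<in>{..<n}. \<theta> i * b i * (\<Prod>k\<in>{..<n}-{i}. P.prob {\<omega>\<in>space M. -1 < X k \<omega>})) * (\<Prod>k\<in>{}. P.prob {\<omega>\<in>space M. X k \<omega> \<in> (\<lambda>_. UNIV) k})"
    unfolding b_def using one by (simp add: prod.neutral)
  have incl: "{\<omega>\<in>space M. (\<exists>\<mu>\<subseteq>{..<n}. \<mu>\<noteq>{} \<and> (\<forall>i\<in>\<mu>. x / sum \<theta> \<mu> < X i \<omega>)) \<and> (\<forall>i\<in>{..<n}. -1 < X i \<omega>) \<and> (\<forall>k\<in>{}. X k \<omega> \<in> (\<lambda>_. UNIV) k)}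
      \<subseteq> {\<omega> \<in> space M. (\<Sum>i<n. \<theta> i * X i \<omega>) > x}"
  proof
    fix \<omega> assume "\<omega> \<in> {\<omega>\<in>space M. (\<exists>\<mu>\<subseteq>{..<n}. \<mu>\<noteq>{} \<and> (\<forall>i\<in>\<mu>. x / sum \<theta> \<mu> < X i \<omega>)) \<and> (\<forall>i\<in>{..<n}. -1 < X i \<omega>) \<and> (\<forall>k\<in>{}. X k \<omega> \<in> (\<lambda>_. UNIV) k)}"
    then obtain \<mu> where sp: "\<omega> \<in> space M" and mu: "\<mu> \<subseteq> {..<n}" "\<mu> \<noteq> {}" "\<forall>i\<in>\<mu>. x / sum \<theta> \<mu> < X i \<omega>"
      by blast
    have fin: "finite \<mu>" using mu(1) by (rule finite_subset) simp
    have p: "0 < sum \<theta> \<mu>" using mu fin \<theta>pos by (intro sum_pos) auto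
    have "x = (\<Sum>i\<in>\<mu>. \<theta> i) * (x / sum \<theta> \<mu>)"
      using p by simp
    also have "\<dots> = (\<Sum>i\<in>\<mu>. \<theta> i * (x / sum \<theta> \<mu>))"
      by (rule sum_distrib_right)
    also have "\<dots> < (\<Sum>i\<in>\<mu>. \<theta> i * X i \<omega>)"
      using fin mu \<theta>pos by (intro sum_strict_mono mult_strict_left_mono) auto
    also have "\<dots> \<le> (\<Sum>i<n. \<theta> i * X i \<omega>)"
    proof (rule sum_mono2)
      show "\<mu> \<subseteq> {..<n}" by (rule mu(1))
      fix b assume "b \<in> {..<n} - \<mu>"
      then have "b < n" by auto
      then show "0 \<le> \<theta> b * X b \<omega>" using \<theta>pos[of b] assms(5)[of b \<omega>] sp by simp
    qed simp
    finally show "\<omega> \<in> {\<omega> \<in> space M. (\<Sum>i<n. \<theta> i * X i \<omega>) > x}" using sp by simp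
  qed
  have meas: "{\<omega> \<in> space M. (\<Sum>i<n. \<theta> i * X i \<omega>) > x} \<in> sets M"
  proof -
    have "(\<lambda>\<omega>. \<Sum>i<n. \<theta> i * X i \<omega>) \<in> borel_measurable M"
      using assms(3) by (intro borel_measurable_sum borel_measurable_times borel_measurable_const) auto
    then show ?thesis by (intro borel_measurable_less) auto
  qed
  show ?thesis unfolding lhs using main P.finite_measure_mono[OF incl meas] by linarith
qed


end
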